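(* Let $\Omega$ be a $\sigma$-compact, locally compact Hausdorff topological space, and let $\mathcal{A}$ be a linear space of continuous real-valued functions on $\Omega$ which contains all constant functions and separates the points of $\Omega$. Then the following conditions are equivalent: (i) for every compact set $K\subset\Omega$ and every constant $C\geq 1$ the set $$\{\omega\in\Omega\mid a(\omega)\leq C\sup_{K}|a| \text{ for all } a\in\mathcal{A}\}$$ is a compact subset of $\Omega$; (ii) there exists a non-negative, continuous, proper function $p\colon\Omega\to[0,\infty)$ such that $p=\sup\{a_\alpha\mid \alpha\in A\}$ pointwise for some symmetric family $(a_\alpha)_{\alpha\in A}$ of functions in $\mathcal{A}$; (iii) there exists a non-negative, proper function $p\colon\Omega\to[0,\infty)$ which is bounded on compact sets and such that $p=\sup\{a_\alpha\mid \alpha\in A\}$ pointwise for some symmetric family $(a_\alpha)_{\alpha\in A}$ of functions in $\mathcal{A}$. Moreover, if these conditions hold, the function $p$ in (ii) can be chosen so that for every compact set $L\subset\Omega$ there are finitely many members $a_{\alpha_1},\dots,a_{\alpha_m}$ of the family with $p=\max\{a_{\alpha_1},\dots,a_{\alpha_m}\}$ on $L$.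
   Context: A function $p\colon\Omega\to Z$ between topological spaces is proper if preimages of compact sets are compact. A family of functions is symmetric if together with each function $a$ it also contains $-a$. For a set $K$ and function $a$, $\sup_K|a|=\sup\{|a(\omega)|\mid\omega\in K\}$. *)

theory Defs
  imports "HOL-Analysis.Analysis"
begin

definition sigma_compact_space :: "'a topology \<Rightarrow> bool" where
  "sigma_compact_space X \<longleftrightarrow>
     (\<exists>\<K>. countable \<K> \<and> (\<forall>K\<in>\<K>. compactin X K) \<and> \<Union>\<K> = topspace X)"

definition proper_fun :: "'a topology \<Rightarrow> ('a \<Rightarrow> real) \<Rightarrow> bool" where
  "proper_fun X p \<longleftrightarrow>
     (\<forall>C. compact C \<longrightarrow> compactin X {x \<in> topspace X. p x \<in> C})"

text \<open>sup over K of |a|, with the convention that it is 0 for empty K.\<close>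
definition sup_abs_on :: "'a set \<Rightarrow> ('a \<Rightarrow> real) \<Rightarrow> real" where
  "sup_abs_on K a = Sup ((\<lambda>x. \<bar>a x\<bar>) ` K \<union> {0})"

definition pointwise_sup :: "'a topology \<Rightarrow> ('a \<Rightarrow> real) set \<Rightarrow> ('a \<Rightarrow> real) \<Rightarrow> bool" where
  "pointwise_sup X F p \<longleftrightarrow>
     (\<forall>x\<in>topspace X. (\<forall>a\<in>F. a x \<le> p x) \<and> (\<forall>b. (\<forall>a\<in>F. a x \<le> b) \<longrightarrow> p x \<le> b))"

definition symmetric_family :: "('a \<Rightarrow> real) set \<Rightarrow> bool" where
  "symmetric_family F \<longleftrightarrow> (\<forall>a\<in>F. (\<lambda>x. - a x) \<in> F)"

end

theory Submission
  imports Defs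
begin



lemma max_cont:
  assumes "finite G" "G \<noteq> {}" "\<forall>a\<in>G. continuous_map X euclideanreal a"
  shows "continuous_map X euclideanreal (\<lambda>x. Max ((\<lambda>a. a x) ` G))"
  using assms
proof (induction G rule: finite_ne_induct)
  case (singleton b)
  then show ?case by simp
next
  case (insert b G)
  have "(\<lambda>x. Max ((\<lambda>a. a x) ` insert b G)) = (\<lambda>x. max (b x) (Max ((\<lambda>a. a x) ` G)))"
    using insert by (simp add: Max_insert)
  then show ?case using insert by (simp add: continuous_map_real_max)
qed

lemma sup_abs_ge:
  assumes "compactin X K" "continuous_map X euclideanreal a" "x \<in> K"
  shows "\<bar>a x\<bar> \<le> sup_abs_on K a" "0 \<le> sup_abs_on K a"
proof -
  have "compactin euclideanreal ((\<lambda>x. \<bar>a x\<bar>) ` K)"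
    by (rule image_compactin[OF assms(1)]) (simp add: continuous_map_real_abs assms(2))
  then have "bdd_above ((\<lambda>x. \<bar>a x\<bar>) ` K)"
    by (simp add: bounded_imp_bdd_above compact_imp_bounded)
  then have b: "bdd_above ((\<lambda>x. \<bar>a x\<bar>) ` K \<union> {0})" by simp
  show "\<bar>a x\<bar> \<le> sup_abs_on K a" unfolding sup_abs_on_def
    by (rule cSup_upper[OF _ b]) (use assms(3) in auto)
  show "0 \<le> sup_abs_on K a" unfolding sup_abs_on_def
    by (rule cSup_upper[OF _ b]) auto
qed

lemma level:
  fixes \<A> :: "('a \<Rightarrow> real) set"
  assumes cont: "\<forall>a\<in>\<A>. continuous_map X euclideanreal a"
    and smult: "\<forall>c::real. \<forall>a\<in>\<A>. (\<lambda>x. c * a x) \<in> \<A>"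
    and K: "compactin X K" and D: "compactin X D"
    and disj: "D \<inter> {\<omega> \<in> topspace X. \<forall>a\<in>\<A>. a \<omega> \<le> (real n + 2) * sup_abs_on K a} = {}"
  shows "\<exists>G. finite G \<and> G \<subseteq> \<A> \<and> (\<forall>a\<in>G. \<forall>x\<in>K. \<bar>a x\<bar> \<le> 1) \<and> (\<forall>x\<in>D. \<exists>a\<in>G. a x > real n)"
proof -
  have Dt: "D \<subseteq> topspace X" using D compactin_subset_topspace by blast
  have "\<forall>\<omega>\<in>D. \<exists>b\<in>\<A>. (\<forall>x\<in>K. \<bar>b x\<bar> \<le> 1) \<and> b \<omega> > real n"
  proof
    fix \<omega> assume w: "\<omega> \<in> D"
    then obtain a where aA: "a \<in> \<A>" and agt: "a \<omega> > (real n + 2) * sup_abs_on K a"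
    proof -
      have "\<omega> \<notin> {\<omega> \<in> topspace X. \<forall>a\<in>\<A>. a \<omega> \<le> (real n + 2) * sup_abs_on K a}" using w disj by blast
      then show ?thesis using that Dt w by (auto simp: not_le)
    qed
    define s where "s = sup_abs_on K a"
    have s0: "0 \<le> s" using sup_abs_ge(2)[OF K, of a] cont aA K unfolding s_def
      by (cases "K = {}") (auto simp: sup_abs_on_def)
    have apos: "a \<omega> > 0" using agt s0 unfolding s_def[symmetric]
      by (smt (verit) mult_nonneg_nonneg of_nat_0_le_iff)
    define b where "b = (\<lambda>x. ((real n + 1) / a \<omega>) * a x)"
    have "b \<in> \<A>" using smult aA unfolding b_def by blast
    moreover have "\<forall>x\<in>K. \<bar>b x\<bar> \<le> 1"
    proof
      fix x assume x: "x \<in> K"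
      have ax: "\<bar>a x\<bar> \<le> s" using sup_abs_ge(1)[OF K _ x] cont aA unfolding s_def by blast
      have "(real n + 1) * \<bar>a x\<bar> \<le> (real n + 1) * s" using ax by (intro mult_left_mono) auto
      also have "\<dots> \<le> (real n + 2) * s" using s0 by (intro mult_right_mono) auto
      finally have "(real n + 1) * \<bar>a x\<bar> \<le> a \<omega>" using agt unfolding s_def by linarith
      moreover have "\<bar>b x\<bar> = ((real n + 1) * \<bar>a x\<bar>) / a \<omega>" using apos
        unfolding b_def by (simp add: abs_mult)
      ultimately show "\<bar>b x\<bar> \<le> 1" using apos by simp
    qed
    moreover have "b \<omega> > real n" using apos unfolding b_def by simp
    ultimately show "\<exists>b\<in>\<A>. (\<forall>x\<in>K. \<bar>b x\<bar> \<le> 1) \<and> b \<omega> > real n" by blast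
  qed
  then obtain f where f: "\<And>\<omega>. \<omega> \<in> D \<Longrightarrow> f \<omega> \<in> \<A> \<and> (\<forall>x\<in>K. \<bar>f \<omega> x\<bar> \<le> 1) \<and> f \<omega> \<omega> > real n"
    by metis
  define U where "U \<omega> = {x \<in> topspace X. f \<omega> x \<in> {real n<..}}" for \<omega>
  have "\<forall>V\<in>U ` D. openin X V"
  proof
    fix V assume "V \<in> U ` D"
    then obtain \<omega> where "\<omega> \<in> D" "V = U \<omega>" by blast
    moreover have "continuous_map X euclideanreal (f \<omega>)" using f cont \<open>\<omega> \<in> D\<close> by blast
    ultimately show "openin X V" unfolding U_def
      by (metis openin_continuous_map_preimage open_greaterThan open_openin)
  qed
  moreover have "D \<subseteq> \<Union>(U ` D)" using f Dt unfolding U_def by auto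
  ultimately obtain \<F> where "finite \<F>" "\<F> \<subseteq> U ` D" "D \<subseteq> \<Union>\<F>"
    using D unfolding compactin_def by meson
  then obtain D' where D': "D' \<subseteq> D" "finite D'" "\<F> = U ` D'"
    by (meson finite_subset_image)
  show ?thesis
  proof (intro exI conjI)
    show "finite (f ` D')" using D' by simp
    show "f ` D' \<subseteq> \<A>" using D' f by auto
    show "\<forall>a\<in>f ` D'. \<forall>x\<in>K. \<bar>a x\<bar> \<le> 1" using D' f by auto
    show "\<forall>x\<in>D. \<exists>a\<in>f ` D'. real n < a x"
      using \<open>D \<subseteq> \<Union>\<F>\<close> D' unfolding U_def by auto
  qed
qed


lemma c3_c1:
  fixes X :: "'a topology" and \<A> :: "('a \<Rightarrow> real) set"
  assumes haus: "Hausdorff_space X"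
    and cont: "\<forall>a\<in>\<A>. continuous_map X euclideanreal a"
    and const: "\<forall>c::real. (\<lambda>x. c) \<in> \<A>"
    and p0: "\<forall>x\<in>topspace X. p x \<ge> 0" and prp: "proper_fun X p"
    and bnd: "\<forall>K. compactin X K \<longrightarrow> (\<exists>B. \<forall>x\<in>K. \<bar>p x\<bar> \<le> B)"
    and FA: "F \<subseteq> \<A>" and sym: "symmetric_family F" and ps: "pointwise_sup X F p"
    and K: "compactin X K" and C: "C \<ge> (1::real)"
  shows "compactin X {\<omega> \<in> topspace X. \<forall>a\<in>\<A>. a \<omega> \<le> C * sup_abs_on K a}"
proof -
  define H where "H = {\<omega> \<in> topspace X. \<forall>a\<in>\<A>. a \<omega> \<le> C * sup_abs_on K a}"
  obtain B where B: "\<forall>x\<in>K. \<bar>p x\<bar> \<le> B" using bnd K by blast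
  define B' where "B' = max B 0"
  have Kt: "K \<subseteq> topspace X" using K compactin_subset_topspace by blast
  have sF: "sup_abs_on K a \<le> B'" if a: "a \<in> F" for a
  proof -
    have "\<forall>y\<in>(\<lambda>x. \<bar>a x\<bar>) ` K \<union> {0}. y \<le> B'"
    proof
      fix y assume "y \<in> (\<lambda>x. \<bar>a x\<bar>) ` K \<union> {0}"
      then consider "y = 0" | x where "x \<in> K" "y = \<bar>a x\<bar>" by blast
      then show "y \<le> B'"
      proof cases
        case 1 then show ?thesis by (simp add: B'_def)
      next
        case 2
        have "(\<lambda>x. - a x) \<in> F" using sym a unfolding symmetric_family_def by blast
        then have "a x \<le> p x" "- a x \<le> p x" using ps a 2 Kt unfolding pointwise_sup_def by auto
        then show ?thesis using B 2 unfolding B'_def by force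
      qed
    qed
    then show ?thesis unfolding sup_abs_on_def by (intro cSup_least) auto
  qed
  have "H \<subseteq> {x \<in> topspace X. p x \<in> {0..C * B'}}"
  proof
    fix \<omega> assume w: "\<omega> \<in> H"
    then have wt: "\<omega> \<in> topspace X" unfolding H_def by blast
    have "\<forall>a\<in>F. a \<omega> \<le> C * B'"
    proof
      fix a assume a: "a \<in> F"
      then have "a \<omega> \<le> C * sup_abs_on K a" using w FA unfolding H_def by blast
      also have "\<dots> \<le> C * B'" using sF[OF a] C by (intro mult_left_mono) auto
      finally show "a \<omega> \<le> C * B'" .
    qed
    then have "p \<omega> \<le> C * B'" using ps wt unfolding pointwise_sup_def by blast
    then show "\<omega> \<in> {x \<in> topspace X. p x \<in> {0..C * B'}}" using p0 wt by auto
  qed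
  moreover have "compactin X {x \<in> topspace X. p x \<in> {0..C * B'}}"
    using prp unfolding proper_fun_def by blast
  moreover have "closedin X H"
  proof -
    have "H = \<Inter>((\<lambda>a. {x \<in> topspace X. a x \<in> {..C * sup_abs_on K a}}) ` \<A>)"
      using const unfolding H_def by auto
    moreover have "closedin X (\<Inter>((\<lambda>a. {x \<in> topspace X. a x \<in> {..C * sup_abs_on K a}}) ` \<A>))"
    proof (rule closedin_Inter)
      show "(\<lambda>a. {x \<in> topspace X. a x \<in> {..C * sup_abs_on K a}}) ` \<A> \<noteq> {}" using const by blast
    next
      fix S assume "S \<in> (\<lambda>a. {x \<in> topspace X. a x \<in> {..C * sup_abs_on K a}}) ` \<A>"
      then obtain a where a: "a \<in> \<A>" "S = {x \<in> topspace X. a x \<in> {..C * sup_abs_on K a}}" by blast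
      then show "closedin X S"
        using cont by (metis closedin_continuous_map_preimage closed_atMost closed_closedin)
    qed
    ultimately show ?thesis by simp
  qed
  ultimately show ?thesis unfolding H_def[symmetric] by (meson closed_compactin)
qed

lemma c2_c3:
  assumes "continuous_map X euclideanreal p" "compactin X K"
  shows "\<exists>B. \<forall>x\<in>K. \<bar>p x\<bar> \<le> B"
proof -
  have "compact (p ` K)" using image_compactin[OF assms(2,1)] by simp
  then have "bounded (p ` K)" by (rule compact_imp_bounded)
  then show ?thesis by (auto simp: bounded_real)
qed



lemma c1_strong:
  fixes X :: "'a topology" and \<A> :: "('a \<Rightarrow> real) set"
  assumes sig: "sigma_compact_space X" and lc: "locally_compact_space X" and haus: "Hausdorff_space X"
    and cont: "\<forall>a\<in>\<A>. continuous_map X euclideanreal a"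
    and smult: "\<forall>c::real. \<forall>a\<in>\<A>. (\<lambda>x. c * a x) \<in> \<A>"
    and const: "\<forall>c::real. (\<lambda>x. c) \<in> \<A>"
    and hul: "\<forall>K C. compactin X K \<and> C \<ge> (1::real) \<longrightarrow>
              compactin X {\<omega> \<in> topspace X. \<forall>a\<in>\<A>. a \<omega> \<le> C * sup_abs_on K a}"
  shows "\<exists>p F. (\<forall>x\<in>topspace X. p x \<ge> 0) \<and> continuous_map X euclideanreal p \<and>
              proper_fun X p \<and> F \<subseteq> \<A> \<and> symmetric_family F \<and> pointwise_sup X F p \<and>
              (\<forall>L. compactin X L \<longrightarrow>
                 (\<exists>G. finite G \<and> G \<noteq> {} \<and> G \<subseteq> F \<and>
                      (\<forall>x\<in>L. p x = Max ((\<lambda>a. a x) ` G))))"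
proof -
  define hl where "hl K C = {\<omega> \<in> topspace X. \<forall>a\<in>\<A>. a \<omega> \<le> C * sup_abs_on K a}" for K C
  have "\<exists>\<K>. countable \<K> \<and> (\<forall>K\<in>\<K>. compactin X K) \<and> \<Union>\<K> = topspace X"
    using sig unfolding sigma_compact_space_def .
  then obtain \<K> where \<K>0: "countable \<K> \<and> (\<forall>K\<in>\<K>. compactin X K) \<and> \<Union>\<K> = topspace X" ..
  have \<K>: "countable \<K>" "\<forall>K\<in>\<K>. compactin X K" "\<Union>\<K> = topspace X"
    using \<K>0 by simp_all
  define Q where "Q = from_nat_into (insert {} \<K>)"
  have rQ: "range Q = insert {} \<K>" unfolding Q_def using \<K>(1) by simp
  have Qc: "compactin X (Q n)" for n
  proof -
    have "Q n \<in> insert {} \<K>" using rQ by (metis rangeI)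
    then show ?thesis using \<K>(2) by (cases "Q n = {}") auto
  qed
  have Qcov: "topspace X = (\<Union>n. Q n)"
  proof -
    have "(\<Union>n. Q n) = \<Union>(insert {} \<K>)" using rQ by simp
    also have "\<dots> = topspace X" using \<K>(3) by simp
    finally show ?thesis by simp
  qed
  have "\<forall>S. \<exists>W. compactin X S \<longrightarrow> compactin X W \<and> S \<subseteq> X interior_of W"
  proof
    fix S
    show "\<exists>W. compactin X S \<longrightarrow> compactin X W \<and> S \<subseteq> X interior_of W"
    proof (cases "compactin X S")
      case True
      have "\<forall>K. compactin X K
              \<longrightarrow> (\<exists>U L. openin X U \<and> compactin X L \<and> closedin X L \<and> K \<subseteq> U \<and> U \<subseteq> L)"
        using lc[unfolded locally_compact_space_compact_closed_compact[of X, OF disjI1[OF haus]]] .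
      then obtain U L where UL: "openin X U" "compactin X L" "S \<subseteq> U" "U \<subseteq> L"
        using True by blast
      have "U \<subseteq> X interior_of L" using interior_of_maximal[OF UL(4) UL(1)] .
      then show ?thesis using UL by blast
    qed auto
  qed
  then have "\<exists>N. \<forall>S. compactin X S \<longrightarrow> compactin X (N S) \<and> S \<subseteq> X interior_of N S"
    by (rule choice)
  then obtain N where N0: "\<forall>S. compactin X S \<longrightarrow> compactin X (N S) \<and> S \<subseteq> X interior_of N S"
    by blast
  then have N: "\<And>S. compactin X S \<Longrightarrow> compactin X (N S) \<and> S \<subseteq> X interior_of N S" by blast
  define W where "W = rec_nat (N (Q 0)) (\<lambda>n Wn. N (Wn \<union> Q (Suc n) \<union> hl Wn (real n + 2)))"
  have W0: "W 0 = N (Q 0)" and WS: "W (Suc n) = N (W n \<union> Q (Suc n) \<union> hl (W n) (real n + 2))" for n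
    by (simp_all add: W_def)
  have hlc: "compactin X (hl K (real n + 2))" if "compactin X K" for K n
  proof -
    have "(1::real) \<le> real n + 2" by simp
    then show ?thesis unfolding hl_def using hul[rule_format, of K "real n + 2"] that by simp
  qed
  have Wc: "compactin X (W n) \<and> Q n \<subseteq> X interior_of W n" for n
  proof (induction n)
    case 0
    have "compactin X (N (Q 0)) \<and> Q 0 \<subseteq> X interior_of N (Q 0)" by (rule N[OF Qc])
    then show ?case unfolding W0 .
  next
    case (Suc n)
    have c: "compactin X (W n \<union> Q (Suc n) \<union> hl (W n) (real n + 2))"
      using Suc.IH Qc hlc by (intro compactin_Un) auto
    have "compactin X (N (W n \<union> Q (Suc n) \<union> hl (W n) (real n + 2))) \<and>
          W n \<union> Q (Suc n) \<union> hl (W n) (real n + 2) \<subseteq> X interior_of N (W n \<union> Q (Suc n) \<union> hl (W n) (real n + 2))"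
      by (rule N[OF c])
    then show ?case unfolding WS by blast
  qed
  have Wstep: "W n \<union> hl (W n) (real n + 2) \<subseteq> X interior_of W (Suc n)" for n
  proof -
    have c: "compactin X (W n \<union> Q (Suc n) \<union> hl (W n) (real n + 2))"
      using Wc Qc hlc by (intro compactin_Un) auto
    have "compactin X (N (W n \<union> Q (Suc n) \<union> hl (W n) (real n + 2))) \<and>
          W n \<union> Q (Suc n) \<union> hl (W n) (real n + 2) \<subseteq> X interior_of N (W n \<union> Q (Suc n) \<union> hl (W n) (real n + 2))"
      by (rule N[OF c])
    then show ?thesis unfolding WS by blast
  qed
  have Wt: "W n \<subseteq> topspace X" for n using compactin_subset_topspace[OF Wc[of n, THEN conjunct1]] .
  have WSuc: "W n \<subseteq> W (Suc n)" for n
    using Wstep[of n] interior_of_subset[of X "W (Suc n)"] by blast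
  have Wmono: "W n \<subseteq> W m" if "n \<le> m" for n m
    using lift_Suc_mono_le[of W, OF WSuc that] .

  have intmono: "X interior_of W n \<subseteq> X interior_of W m" if "n \<le> m" for n m
    using interior_of_mono[OF Wmono[OF that]] .
  have cover: "\<exists>k. x \<in> X interior_of W k" if "x \<in> topspace X" for x
  proof -
    have "x \<in> (\<Union>n. Q n)" using that Qcov by simp
    then obtain k where "x \<in> Q k" by blast
    then have "x \<in> X interior_of W k" using Wc[of k] by blast
    then show ?thesis by blast
  qed
  define D where "D n = W (Suc (Suc n)) - X interior_of W (Suc n)" for n
  have Dc: "compactin X (D n)" for n
  proof -
    have "closedin X (D n)" unfolding D_def
      by (rule closedin_diff[OF compactin_imp_closedin[OF haus Wc[of "Suc (Suc n)", THEN conjunct1]] openin_interior_of])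
    then show ?thesis unfolding D_def by (rule closed_compactin[OF Wc[of "Suc (Suc n)", THEN conjunct1] Diff_subset])
  qed
  have Ddisj0: "D n \<inter> hl (W n) (real n + 2) = {}" for n
  proof -
    have "hl (W n) (real n + 2) \<subseteq> X interior_of W (Suc n)" using Wstep[of n] by blast
    then show ?thesis unfolding D_def by blast
  qed
  have Ddisj: "D n \<inter> {\<omega> \<in> topspace X. \<forall>a\<in>\<A>. a \<omega> \<le> (real n + 2) * sup_abs_on (W n) a} = {}" for n
    using Ddisj0[of n] unfolding hl_def .
  have "\<forall>n. \<exists>G. finite G \<and> G \<subseteq> \<A> \<and> (\<forall>a\<in>G. \<forall>x\<in>W n. \<bar>a x\<bar> \<le> 1) \<and> (\<forall>x\<in>D n. \<exists>a\<in>G. a x > real n)"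
  proof
    fix n show "\<exists>G. finite G \<and> G \<subseteq> \<A> \<and> (\<forall>a\<in>G. \<forall>x\<in>W n. \<bar>a x\<bar> \<le> 1) \<and> (\<forall>x\<in>D n. \<exists>a\<in>G. a x > real n)"
      by (rule level[OF cont smult Wc[of n, THEN conjunct1] Dc Ddisj])
  qed
  then have "\<exists>GG. \<forall>n. finite (GG n) \<and> GG n \<subseteq> \<A> \<and> (\<forall>a\<in>GG n. \<forall>x\<in>W n. \<bar>a x\<bar> \<le> 1) \<and> (\<forall>x\<in>D n. \<exists>a\<in>GG n. a x > real n)"
    by (rule choice)
  then obtain GG where GG0: "\<forall>n. finite (GG n) \<and> GG n \<subseteq> \<A> \<and> (\<forall>a\<in>GG n. \<forall>x\<in>W n. \<bar>a x\<bar> \<le> 1) \<and> (\<forall>x\<in>D n. \<exists>a\<in>GG n. a x > real n)"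
    by blast
  then have GG: "\<And>n. finite (GG n) \<and> GG n \<subseteq> \<A> \<and> (\<forall>a\<in>GG n. \<forall>x\<in>W n. \<bar>a x\<bar> \<le> 1) \<and> (\<forall>x\<in>D n. \<exists>a\<in>GG n. a x > real n)" by blast
  define neg :: "('a \<Rightarrow> real) \<Rightarrow> ('a \<Rightarrow> real)" where "neg a = (\<lambda>x. - a x)" for a
  define FF where "FF j = {\<lambda>x. 1, \<lambda>x. -1} \<union> (\<Union>m<j. GG m \<union> neg ` GG m)" for j
  define F where "F = {\<lambda>x. 1, \<lambda>x. -1} \<union> (\<Union>m. GG m \<union> neg ` GG m)"
  define M where "M j x = Max ((\<lambda>a. a x) ` FF j)" for j x
  have FFfin: "finite (FF j)" for j unfolding FF_def using GG by auto
  have FFne: "FF j \<noteq> {}" for j unfolding FF_def by blast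
  have FFsub: "FF j \<subseteq> F" for j unfolding FF_def F_def by auto
  have negA: "neg a \<in> \<A>" if "a \<in> \<A>" for a
  proof -
    have "(\<lambda>x. (-1) * a x) \<in> \<A>" using smult that by blast
    then show ?thesis unfolding neg_def by simp
  qed
  have GGA: "GG m \<subseteq> \<A>" for m using GG[of m] by blast
  have FA: "F \<subseteq> \<A>" unfolding F_def
  proof (rule Un_least)
    show "{\<lambda>x. 1, \<lambda>x. -1} \<subseteq> \<A>" using const by blast
    show "(\<Union>m. GG m \<union> neg ` GG m) \<subseteq> \<A>"
    proof (rule UN_least)
      fix m show "GG m \<union> neg ` GG m \<subseteq> \<A>" using GGA[of m] negA by blast
    qed
  qed
  have Fcont: "\<forall>a\<in>F. continuous_map X euclideanreal a" using FA cont by blast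
  have negneg: "neg (neg a) = a" for a unfolding neg_def by simp
  have one: "(\<lambda>x. 1) \<in> FF j" for j unfolding FF_def by blast
  have Fsym: "symmetric_family F"
    unfolding symmetric_family_def
  proof
    fix a assume a: "a \<in> F"
    have "neg a \<in> F"
    proof (cases "a \<in> {\<lambda>x. 1, \<lambda>x. -1}")
      case True
      then have "a = (\<lambda>x. 1) \<or> a = (\<lambda>x. -1)" by blast
      then have "neg a = (\<lambda>x. -1) \<or> neg a = (\<lambda>x. 1)" unfolding neg_def by auto
      then show ?thesis unfolding F_def by blast
    next
      case False
      then obtain m where "a \<in> GG m \<union> neg ` GG m" using a unfolding F_def by blast
      then have "neg a \<in> neg ` GG m \<union> GG m" using negneg by (metis UnE UnI1 UnI2 imageE imageI)
      then show ?thesis unfolding F_def by blast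
    qed
    then show "(\<lambda>x. - a x) \<in> F" unfolding neg_def .
  qed
  have Mge1: "1 \<le> M j x" for j x
  proof -
    have "(\<lambda>a. a x) (\<lambda>x. 1) \<in> (\<lambda>a. a x) ` FF j" using one by (rule imageI)
    then have "(1::real) \<in> (\<lambda>a. a x) ` FF j" by simp
    then show ?thesis unfolding M_def using FFfin[of j] by (intro Max_ge) auto
  qed
  have Mattain: "\<exists>a\<in>FF j. M j x = a x" for j x
  proof -
    have "M j x \<in> (\<lambda>a. a x) ` FF j" unfolding M_def using FFfin[of j] FFne[of j] by (intro Max_in) auto
    then show ?thesis by blast
  qed
  have key: "a x \<le> M j x" if x: "x \<in> W j" and a: "a \<in> F" for a x j
  proof (cases "a \<in> FF j")
    case True
    then show ?thesis unfolding M_def using FFfin[of j] by (intro Max_ge) auto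
  next
    case False
    have "a \<in> (\<Union>m. GG m \<union> neg ` GG m)" using a False unfolding F_def FF_def by blast
    then obtain m where m2: "a \<in> GG m \<union> neg ` GG m" by blast
    have "\<not> m < j" using False m2 unfolding FF_def by blast
    then have m: "j \<le> m" "a \<in> GG m \<union> neg ` GG m" using m2 by simp_all
    have xm: "x \<in> W m" using Wmono[OF m(1)] x by blast
    have "\<bar>a x\<bar> \<le> 1" using m(2) GG[of m] xm unfolding neg_def by auto
    then show ?thesis using Mge1[of j x] by linarith
  qed
  have Meq: "M j x = M k x" if "x \<in> W j" "x \<in> W k" for j k x
  proof -
    obtain a where a: "a \<in> FF j" "M j x = a x" using Mattain by blast
    have aF: "a \<in> F" using FFsub[of j] a(1) by blast
    have 1: "M j x \<le> M k x" using key[OF that(2) aF] a(2) by simp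
    obtain b where b: "b \<in> FF k" "M k x = b x" using Mattain by blast
    have bF: "b \<in> F" using FFsub[of k] b(1) by blast
    have 2: "M k x \<le> M j x" using key[OF that(1) bF] b(2) by simp
    from 1 2 show ?thesis by simp
  qed
  define p where "p x = M (SOME j. x \<in> W j) x" for x
  have pM: "p x = M j x" if "x \<in> W j" for x j
  proof -
    have s: "x \<in> W (SOME j. x \<in> W j)" using that by (rule someI)
    show ?thesis unfolding p_def by (rule Meq[OF s that])
  qed
  have inW: "\<exists>j. x \<in> W j" if xt: "x \<in> topspace X" for x
  proof -
    obtain k where "x \<in> X interior_of W k" using cover[OF xt] by blast
    then have "x \<in> W k" using interior_of_subset[of X "W k"] by blast
    then show ?thesis by blast
  qed
  have psup: "pointwise_sup X F p"
    unfolding pointwise_sup_def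
  proof
    fix x assume "x \<in> topspace X"
    then obtain j where j: "x \<in> W j" using inW by blast
    show "(\<forall>a\<in>F. a x \<le> p x) \<and> (\<forall>b. (\<forall>a\<in>F. a x \<le> b) \<longrightarrow> p x \<le> b)"
    proof (intro conjI allI impI ballI)
      fix a assume "a \<in> F" then show "a x \<le> p x" using key[OF j] pM[OF j] by presburger
    next
      fix b assume b: "\<forall>a\<in>F. a x \<le> b"
      obtain a where a: "a \<in> FF j" "M j x = a x" using Mattain by blast
      have "a \<in> F" using FFsub[of j] a(1) by blast
      then have "a x \<le> b" using b by blast
      then show "p x \<le> b" using a(2) pM[OF j] by simp
    qed
  qed
  have pnn: "\<forall>x\<in>topspace X. p x \<ge> 0"
  proof
    fix x assume "x \<in> topspace X"
    then obtain j where j: "x \<in> W j" using inW by blast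
    show "p x \<ge> 0" using pM[OF j] Mge1[of j x] by simp
  qed
  have Mcont: "continuous_map X euclideanreal (M j)" for j
  proof -
    have "\<forall>a\<in>FF j. continuous_map X euclideanreal a" using FFsub[of j] Fcont by blast
    then have "continuous_map X euclideanreal (\<lambda>x. Max ((\<lambda>a. a x) ` FF j))"
      using FFfin[of j] FFne[of j] by (rule max_cont[rotated 2])
    then show ?thesis unfolding M_def by simp
  qed
  have pintM: "p x = M j x" if "x \<in> X interior_of W j" for x j
  proof -
    have "x \<in> W j" using that interior_of_subset[of X "W j"] by blast
    then show ?thesis by (rule pM)
  qed
  have pcont: "continuous_map X euclideanreal p"
    unfolding continuous_map
  proof (intro conjI allI impI)
    show "p ` topspace X \<subseteq> topspace euclideanreal" by simp
  next
    fix U :: "real set" assume U: "openin euclideanreal U"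
    have "{x \<in> topspace X. p x \<in> U} = (\<Union>j. X interior_of W j \<inter> {x \<in> topspace X. M j x \<in> U})"
    proof
      show "{x \<in> topspace X. p x \<in> U} \<subseteq> (\<Union>j. X interior_of W j \<inter> {x \<in> topspace X. M j x \<in> U})"
      proof
        fix x assume x: "x \<in> {x \<in> topspace X. p x \<in> U}"
        then have xt: "x \<in> topspace X" and xU: "p x \<in> U" by auto
        obtain k where k: "x \<in> X interior_of W k" using cover[OF xt] by blast
        have "M k x \<in> U" using xU pintM[OF k] by simp
        then have "x \<in> X interior_of W k \<inter> {x \<in> topspace X. M k x \<in> U}" using k xt by blast
        then show "x \<in> (\<Union>j. X interior_of W j \<inter> {x \<in> topspace X. M j x \<in> U})" by blast
      qed
    next
      show "(\<Union>j. X interior_of W j \<inter> {x \<in> topspace X. M j x \<in> U}) \<subseteq> {x \<in> topspace X. p x \<in> U}"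
      proof
        fix x assume "x \<in> (\<Union>j. X interior_of W j \<inter> {x \<in> topspace X. M j x \<in> U})"
        then obtain j where j: "x \<in> X interior_of W j" "x \<in> topspace X" "M j x \<in> U" by blast
        then show "x \<in> {x \<in> topspace X. p x \<in> U}" using pintM[OF j(1)] by simp
      qed
    qed
    moreover have "openin X (\<Union>j. X interior_of W j \<inter> {x \<in> topspace X. M j x \<in> U})"
    proof (rule openin_Union)
      fix S assume "S \<in> range (\<lambda>j. X interior_of W j \<inter> {x \<in> topspace X. M j x \<in> U})"
      then obtain j where S: "S = X interior_of W j \<inter> {x \<in> topspace X. M j x \<in> U}" by blast
      show "openin X S" unfolding S
        by (rule openin_Int[OF openin_interior_of openin_continuous_map_preimage[OF Mcont U]])
    qed
    ultimately show "openin X {x \<in> topspace X. p x \<in> U}" by simp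
  qed
  have GGD: "\<exists>a\<in>GG m. a x > real m" if "x \<in> D m" for x m using GG[of m] that by blast
  have GGF: "GG m \<subseteq> F" for m unfolding F_def by blast
  have beyond: "real n < p x" if x: "x \<in> topspace X" "x \<notin> X interior_of W (Suc n)" for x n
  proof -
    have "x \<in> X interior_of W k \<longrightarrow> real n < p x" for k
    proof (induction k)
      case 0 then show ?case using intmono[of 0 "Suc n"] x by auto
    next
      case (Suc k)
      show ?case
      proof
        assume xk: "x \<in> X interior_of W (Suc k)"
        show "real n < p x"
        proof (cases "x \<in> X interior_of W k")
          case True then show ?thesis using Suc.IH by blast
        next
          case False
          show ?thesis
          proof (cases "k \<le> n")
            case True
            then have "X interior_of W (Suc k) \<subseteq> X interior_of W (Suc n)" by (intro intmono) simp
            then show ?thesis using xk x by blast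
          next
            case kn: False
            then obtain m where m: "k = Suc m" "n \<le> m" by (cases k) auto
            have "x \<in> W (Suc k)" using xk interior_of_subset[of X "W (Suc k)"] by blast
            then have "x \<in> D m" unfolding D_def using False m(1) by blast
            then obtain a where a: "a \<in> GG m" "a x > real m" using GGD by blast
            have "a \<in> F" using a(1) GGF by blast
            then have "a x \<le> p x" using psup x(1) unfolding pointwise_sup_def by blast
            then show ?thesis using a(2) m(2) by linarith
          qed
        qed
      qed
    qed
    then show ?thesis using cover[OF x(1)] by blast
  qed
  have pprop: "proper_fun X p"
    unfolding proper_fun_def
  proof (intro allI impI)
    fix C :: "real set" assume C: "compact C"
    have "bounded C" using C by (rule compact_imp_bounded)
    then obtain B where B: "\<forall>y\<in>C. \<bar>y\<bar> \<le> B" unfolding bounded_real by blast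
    define n where "n = nat \<lceil>B\<rceil>"
    have Bn: "B \<le> real n" unfolding n_def by linarith
    have sub: "{x \<in> topspace X. p x \<in> C} \<subseteq> W (Suc n)"
    proof
      fix x assume x: "x \<in> {x \<in> topspace X. p x \<in> C}"
      then have xt: "x \<in> topspace X" and "p x \<in> C" by auto
      then have "\<bar>p x\<bar> \<le> B" using B by blast
      then have "\<not> real n < p x" using Bn by linarith
      then have "x \<in> X interior_of W (Suc n)" using beyond[OF xt] by blast
      then show "x \<in> W (Suc n)" using interior_of_subset[of X "W (Suc n)"] by blast
    qed
    have "closedin euclideanreal C" using C by (simp add: compact_imp_closed closed_closedin[symmetric])
    then have "closedin X {x \<in> topspace X. p x \<in> C}"
      by (rule closedin_continuous_map_preimage[OF pcont])
    then show "compactin X {x \<in> topspace X. p x \<in> C}"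
      by (rule closed_compactin[OF Wc[of "Suc n", THEN conjunct1] sub])
  qed
  have loc: "\<forall>L. compactin X L \<longrightarrow>
                 (\<exists>G. finite G \<and> G \<noteq> {} \<and> G \<subseteq> F \<and> (\<forall>x\<in>L. p x = Max ((\<lambda>a. a x) ` G)))"
  proof (intro allI impI)
    fix L assume L: "compactin X L"
    have Lt: "L \<subseteq> topspace X" using L by (rule compactin_subset_topspace)
    have "L \<subseteq> \<Union>(range (\<lambda>j. X interior_of W j))"
    proof
      fix x assume "x \<in> L"
      then have "x \<in> topspace X" using Lt by blast
      then obtain k where "x \<in> X interior_of W k" using cover by blast
      then show "x \<in> \<Union>(range (\<lambda>j. X interior_of W j))" by blast
    qed
    moreover have "\<forall>U\<in>range (\<lambda>j. X interior_of W j). openin X U" by auto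
    ultimately obtain \<F> where FF1: "finite \<F>" "\<F> \<subseteq> range (\<lambda>j. X interior_of W j)" "L \<subseteq> \<Union>\<F>"
      using L unfolding compactin_def by blast
    obtain J where "J \<subseteq> UNIV" "finite J" "\<F> = (\<lambda>j. X interior_of W j) ` J"
      using finite_subset_image[OF FF1(1,2)] by blast
    then have J: "finite J" "L \<subseteq> (\<Union>j\<in>J. X interior_of W j)" using FF1(3) by auto
    define n where "n = Max (insert 0 J)"
    have "L \<subseteq> W n"
    proof
      fix x assume "x \<in> L"
      then obtain j where j: "j \<in> J" "x \<in> X interior_of W j" using J by blast
      have "j \<le> n" using J(1) j(1) unfolding n_def by simp
      then have "W j \<subseteq> W n" by (rule Wmono)
      then show "x \<in> W n" using j(2) interior_of_subset[of X "W j"] by blast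
    qed
    then have "\<forall>x\<in>L. p x = Max ((\<lambda>a. a x) ` FF n)" using pM unfolding M_def by blast
    then show "\<exists>G. finite G \<and> G \<noteq> {} \<and> G \<subseteq> F \<and> (\<forall>x\<in>L. p x = Max ((\<lambda>a. a x) ` G))"
      using FFfin[of n] FFne[of n] FFsub[of n] by blast
  qed
  show ?thesis
    using pnn pcont pprop FA Fsym psup loc by blast
qed


theorem mainTheorem1:
  fixes X :: "'a topology" and \<A> :: "('a \<Rightarrow> real) set"
  assumes "sigma_compact_space X" and "locally_compact_space X" and "Hausdorff_space X"
    and cont: "\<forall>a\<in>\<A>. continuous_map X euclideanreal a"
    and add: "\<forall>a\<in>\<A>. \<forall>b\<in>\<A>. (\<lambda>x. a x + b x) \<in> \<A>"
    and smult: "\<forall>c::real. \<forall>a\<in>\<A>. (\<lambda>x. c * a x) \<in> \<A>"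
    and const: "\<forall>c::real. (\<lambda>x. c) \<in> \<A>"
    and sep: "\<forall>x\<in>topspace X. \<forall>y\<in>topspace X. x \<noteq> y \<longrightarrow> (\<exists>a\<in>\<A>. a x \<noteq> a y)"
  shows
   "let
      c1 = (\<forall>K C. compactin X K \<and> C \<ge> (1::real) \<longrightarrow>
              compactin X {\<omega> \<in> topspace X. \<forall>a\<in>\<A>. a \<omega> \<le> C * sup_abs_on K a});
      c2 = (\<exists>p F. (\<forall>x\<in>topspace X. p x \<ge> 0) \<and> continuous_map X euclideanreal p \<and>
              proper_fun X p \<and> F \<subseteq> \<A> \<and> symmetric_family F \<and> pointwise_sup X F p);
      c3 = (\<exists>p F. (\<forall>x\<in>topspace X. p x \<ge> 0) \<and> proper_fun X p \<and>
              (\<forall>K. compactin X K \<longrightarrow> (\<exists>B. \<forall>x\<in>K. \<bar>p x\<bar> \<le> B)) \<and>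
              F \<subseteq> \<A> \<and> symmetric_family F \<and> pointwise_sup X F p)
    in (c1 \<longleftrightarrow> c2) \<and> (c2 \<longleftrightarrow> c3) \<and>
       (c1 \<longrightarrow>
          (\<exists>p F. (\<forall>x\<in>topspace X. p x \<ge> 0) \<and> continuous_map X euclideanreal p \<and>
              proper_fun X p \<and> F \<subseteq> \<A> \<and> symmetric_family F \<and> pointwise_sup X F p \<and>
              (\<forall>L. compactin X L \<longrightarrow>
                 (\<exists>G. finite G \<and> G \<noteq> {} \<and> G \<subseteq> F \<and>
                      (\<forall>x\<in>L. p x = Max ((\<lambda>a. a x) ` G))))))"
  proof -
  have S: "\<exists>p F. (\<forall>x\<in>topspace X. p x \<ge> 0) \<and> continuous_map X euclideanreal p \<and>
              proper_fun X p \<and> F \<subseteq> \<A> \<and> symmetric_family F \<and> pointwise_sup X F p \<and>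
              (\<forall>L. compactin X L \<longrightarrow>
                 (\<exists>G. finite G \<and> G \<noteq> {} \<and> G \<subseteq> F \<and>
                      (\<forall>x\<in>L. p x = Max ((\<lambda>a. a x) ` G))))"
    if h: "\<forall>K C. compactin X K \<and> C \<ge> (1::real) \<longrightarrow>
              compactin X {\<omega> \<in> topspace X. \<forall>a\<in>\<A>. a \<omega> \<le> C * sup_abs_on K a}"
    using c1_strong[OF assms(1,2,3) cont smult const h] .
  have T: "\<forall>K C. compactin X K \<and> C \<ge> (1::real) \<longrightarrow>
              compactin X {\<omega> \<in> topspace X. \<forall>a\<in>\<A>. a \<omega> \<le> C * sup_abs_on K a}"
    if h: "\<exists>p F. (\<forall>x\<in>topspace X. p x \<ge> 0) \<and> proper_fun X p \<and>
              (\<forall>K. compactin X K \<longrightarrow> (\<exists>B. \<forall>x\<in>K. \<bar>p x\<bar> \<le> B)) \<and>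
              F \<subseteq> \<A> \<and> symmetric_family F \<and> pointwise_sup X F p"
  proof -
    obtain p F where pF: "\<forall>x\<in>topspace X. p x \<ge> 0" "proper_fun X p"
       "\<forall>K. compactin X K \<longrightarrow> (\<exists>B. \<forall>x\<in>K. \<bar>p x\<bar> \<le> B)"
       "F \<subseteq> \<A>" "symmetric_family F" "pointwise_sup X F p" using h by blast
    show ?thesis using c3_c1[OF assms(3) cont const pF] by blast
  qed
  have U: "\<exists>p F. (\<forall>x\<in>topspace X. p x \<ge> 0) \<and> proper_fun X p \<and>
              (\<forall>K. compactin X K \<longrightarrow> (\<exists>B. \<forall>x\<in>K. \<bar>p x\<bar> \<le> B)) \<and>
              F \<subseteq> \<A> \<and> symmetric_family F \<and> pointwise_sup X F p"
    if h: "\<exists>p F. (\<forall>x\<in>topspace X. p x \<ge> 0) \<and> continuous_map X euclideanreal p \<and>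
              proper_fun X p \<and> F \<subseteq> \<A> \<and> symmetric_family F \<and> pointwise_sup X F p"
  proof -
    obtain p F where pF: "\<forall>x\<in>topspace X. p x \<ge> 0" "continuous_map X euclideanreal p" "proper_fun X p"
       "F \<subseteq> \<A>" "symmetric_family F" "pointwise_sup X F p" using h by blast
    have "\<forall>K. compactin X K \<longrightarrow> (\<exists>B. \<forall>x\<in>K. \<bar>p x\<bar> \<le> B)" using c2_c3[OF pF(2)] by blast
    then show ?thesis using pF by blast
  qed
  have V: "\<exists>p F. (\<forall>x\<in>topspace X. p x \<ge> 0) \<and> continuous_map X euclideanreal p \<and>
              proper_fun X p \<and> F \<subseteq> \<A> \<and> symmetric_family F \<and> pointwise_sup X F p"
    if h: "\<forall>K C. compactin X K \<and> C \<ge> (1::real) \<longrightarrow>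
              compactin X {\<omega> \<in> topspace X. \<forall>a\<in>\<A>. a \<omega> \<le> C * sup_abs_on K a}"
  proof -
    obtain p F where pF: "(\<forall>x\<in>topspace X. p x \<ge> 0)" "continuous_map X euclideanreal p"
              "proper_fun X p" "F \<subseteq> \<A>" "symmetric_family F" "pointwise_sup X F p"
      using S[OF h] by blast
    then show ?thesis by blast
  qed
  show ?thesis unfolding Let_def
    apply (intro conjI iffI impI)
        apply (erule V)
       apply (erule T[OF U])
      apply (erule U)
     apply (erule V[OF T])
    apply (erule S)
    done
qed

end
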